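(* Let $a,b,c$ be positive numbers with $a<b<c$, $b-a<c_0<a$, $0<c_1<2a-b$ and $\lfloor c/b\rfloor\ge2$, where $c_0=c-\lfloor c/b\rfloor b$ and $c_1=\lfloor c/b\rfloor b-\lfloor\lfloor c/b\rfloor b/a\rfloor a$. Then $\mathcal S_{a,b,c}=\emptyset$ if and only if for every $t\in\mathbb R$ there exists $t_0\in[c_0+a-b,c_0)$ such that $$\lim_{n\to\infty}\frac1n\sum_{k=0}^{n-1}f\big((R_{a,b,c})^k(t)\big)=f(t_0)$$ for every continuous $a$-periodic function $f:\mathbb R\to\mathbb C$.
   Context: For $a,b,c>0$ and $t\in\mathbb R$, $\mathbf M_{a,b,c}(t)=(\chi_{[0,c)}(t-\mu+\lambda))_{\mu\in a\mathbb Z,\lambda\in b\mathbb Z}$ is the infinite matrix with rows indexed by $a\mathbb Z$ and columns by $b\mathbb Z$, acting by $(\mathbf M_{a,b,c}(t)\mathbf x)(\mu)=\sum_{\lambda\in b\mathbb Z}\chi_{[0,c)}(t-\mu+\lambda)\mathbf x(\lambda)$. $\mathcal B_b^0$ is the set of vectors $(\mathbf x(\lambda))_{\lambda\in b\mathbb Z}$ with entries in $\{0,1\}$ and $\mathbf x(0)=1$. $\mathbf 1$ denotes the vector indexed by $a\mathbb Z$ with all entries $1$. $\mathcal S_{a,b,c}=\{t:\mathbf M_{a,b,c}(t)\mathbf x=\mathbf 1\text{ for some }\mathbf x\in\mathcal B_b^0\}$. $R_{a,b,c}(t)=t+\lfloor c/b\rfloor b+b$ if $t\in[0,c_0+a-b)+a\mathbb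 Z$, $R_{a,b,c}(t)=t$ if $t\in[c_0+a-b,c_0)+a\mathbb Z$, $R_{a,b,c}(t)=t+\lfloor c/b\rfloor b$ if $t\in[c_0,a)+a\mathbb Z$; $(R_{a,b,c})^k$ is the $k$-fold iterate. $A+a\mathbb Z=\{x+ak:x\in A,k\in\mathbb Z\}$. *)

theory Defs
  imports "HOL-Analysis.Analysis"
begin

definition c0 :: "real \<Rightarrow> real \<Rightarrow> real \<Rightarrow> real" where
  "c0 a b c = c - of_int \<lfloor>c / b\<rfloor> * b"

definition c1 :: "real \<Rightarrow> real \<Rightarrow> real \<Rightarrow> real" where
  "c1 a b c = of_int \<lfloor>c / b\<rfloor> * b - of_int \<lfloor>of_int \<lfloor>c / b\<rfloor> * b / a\<rfloor> * a"

text \<open>Row mu = a*m (m integer) of M(t) x, where x is indexed by lambda = b*k (k integer).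
  The sum runs over the (finite) set of k for which the indicator is nonzero.\<close>
definition M_apply :: "real \<Rightarrow> real \<Rightarrow> real \<Rightarrow> real \<Rightarrow> (int \<Rightarrow> real) \<Rightarrow> int \<Rightarrow> real" where
  "M_apply a b c t x m =
     (\<Sum>k\<in>{k::int. t - a * of_int m + b * of_int k \<in> {0..<c}}. x k)"

definition B0 :: "(int \<Rightarrow> real) set" where
  "B0 = {x. (\<forall>k. x k \<in> {0, 1}) \<and> x 0 = 1}"

definition S_set :: "real \<Rightarrow> real \<Rightarrow> real \<Rightarrow> real set" where
  "S_set a b c = {t. \<exists>x\<in>B0. \<forall>m::int. M_apply a b c t x m = 1}"

definition plus_aZ :: "real set \<Rightarrow> real \<Rightarrow> real set" where
  "plus_aZ A a = {x + a * of_int k | x k. x \<in> A}"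

definition R :: "real \<Rightarrow> real \<Rightarrow> real \<Rightarrow> real \<Rightarrow> real" where
  "R a b c t =
     (if t \<in> plus_aZ {0..<c0 a b c + a - b} a then t + of_int \<lfloor>c / b\<rfloor> * b + b
      else if t \<in> plus_aZ {c0 a b c + a - b..<c0 a b c} a then t
      else t + of_int \<lfloor>c / b\<rfloor> * b)"

end

theory Submission
  imports Defs
begin


locale abc =
  fixes a b c :: real
  assumes a_pos: "0 < a" and ab: "a < b" and bc: "b < c"
    and c0_low: "b - a < c0 a b c" and c0_up: "c0 a b c < a"
    and c1_pos: "0 < c1 a b c" and c1_up: "c1 a b c < 2*a - b"
    and N2: "\<lfloor>c/b\<rfloor> \<ge> 2"
begin

definition "N = \<lfloor>c/b\<rfloor>"
definition "C = c0 a b c"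
definition "h = C + a - b"
definition ph where "ph x = x - a * of_int \<lfloor>x/a\<rfloor>"

lemma N2': "N \<ge> 2" using N2 by (simp add: N_def)
lemma c_eq: "c = of_int N * b + C" by (simp add: N_def C_def c0_def)
lemma C_low: "b - a < C" and C_up: "C < a" using c0_low c0_up by (auto simp: C_def)
lemma h_pos: "0 < h" using C_low by (simp add: h_def)
lemma h_C: "h < C" using ab by (simp add: h_def)
lemma b_pos: "0 < b" using a_pos ab by simp

lemma ph_range: "0 \<le> ph x" "ph x < a"
proof -
  have "of_int \<lfloor>x/a\<rfloor> \<le> x/a" "x/a < of_int \<lfloor>x/a\<rfloor> + 1" by linarith+
  then have "a * of_int \<lfloor>x/a\<rfloor> \<le> x" "x < a * (of_int \<lfloor>x/a\<rfloor> + 1)"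
    using a_pos by (metis mult_left_mono less_imp_le nonzero_mult_div_cancel_left less_irrefl times_divide_eq_right,
                    metis mult_strict_left_mono nonzero_mult_div_cancel_left less_irrefl times_divide_eq_right)
  then show "0 \<le> ph x" "ph x < a" by (auto simp: ph_def algebra_simps)
qed

lemma ph_eq: "x = ph x + a * of_int \<lfloor>x/a\<rfloor>" by (simp add: ph_def)

lemma ph_unique: assumes "0 \<le> y" "y < a" "x = y + a * of_int n" shows "ph x = y"
proof -
  have "x / a = y / a + of_int n" using assms a_pos by (simp add: field_simps)
  moreover have "0 \<le> y/a" "y/a < 1" using assms a_pos by auto
  ultimately have "\<lfloor>x/a\<rfloor> = n" by (simp add: floor_unique)
  then show ?thesis using assms by (simp add: ph_def)
qed

lemma ph_add_int: "ph (x + a * of_int n) = ph x"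
  using ph_range[of x] by (intro ph_unique[where n="\<lfloor>x/a\<rfloor> + n"]) (auto simp: ph_def algebra_simps)

lemma ph_add: "ph (x + y) = ph (ph x + y)"
  by (metis ph_add_int ph_eq add.commute add.left_commute)

lemma ph_id: "0 \<le> x \<Longrightarrow> x < a \<Longrightarrow> ph x = x"
  using ph_unique[of x x 0] by simp

lemma plus_aZ_iff: assumes "A \<subseteq> {0..<a}" shows "x \<in> plus_aZ A a \<longleftrightarrow> ph x \<in> A"
proof
  assume "x \<in> plus_aZ A a"
  then obtain y k where "x = y + a * of_int k" "y \<in> A" by (auto simp: plus_aZ_def)
  then show "ph x \<in> A" using assms ph_unique[of y x k] by auto
next
  assume "ph x \<in> A"
  then show "x \<in> plus_aZ A a" unfolding plus_aZ_def using ph_eq[of x] by blast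
qed

lemma mem_low: "x \<in> plus_aZ {0..<C + a - b} a \<longleftrightarrow> ph x < h"
  using plus_aZ_iff[of "{0..<C + a - b}" x] ph_range[of x] h_C C_up by (auto simp: h_def)

lemma hole_iff: "x \<in> plus_aZ {C + a - b..<C} a \<longleftrightarrow> h \<le> ph x \<and> ph x < C"
  using plus_aZ_iff[of "{C + a - b..<C}" x] h_C C_up h_pos by (auto simp: h_def)

lemma R_low: "ph x < h \<Longrightarrow> R a b c x = x + of_int N * b + b"
  using mem_low[of x] by (simp add: R_def N_def C_def)

lemma R_hole: "h \<le> ph x \<Longrightarrow> ph x < C \<Longrightarrow> R a b c x = x"
  using mem_low[of x] hole_iff[of x] by (simp add: R_def N_def C_def)

lemma R_high: "C \<le> ph x \<Longrightarrow> R a b c x = x + of_int N * b"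
  using mem_low[of x] hole_iff[of x] h_C by (simp add: R_def N_def C_def)

lemma window:
  assumes x: "x \<in> B0" and M: "M_apply a b c t x m = 1"
  shows "\<exists>k. t - a * of_int m + b * of_int k \<in> {0..<c} \<and> x k = 1"
    "\<And>k k'. t - a * of_int m + b * of_int k \<in> {0..<c} \<Longrightarrow> x k = 1 \<Longrightarrow>
       t - a * of_int m + b * of_int k' \<in> {0..<c} \<Longrightarrow> x k' = 1 \<Longrightarrow> k = k'"
proof -
  define I where "I = {k::int. t - a * of_int m + b * of_int k \<in> {0..<c}}"
  have s: "sum x I = 1" using M by (simp add: M_apply_def I_def)
  then have fin: "finite I" by (metis sum.infinite zero_neq_one)
  have x01: "\<And>k. x k = 0 \<or> x k = 1" using x by (auto simp: B0_def)
  have "sum x I = sum x {k\<in>I. x k = 1}"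
    using fin by (subst sum.inter_filter) (auto intro!: sum.cong, metis x01)
  also have "\<dots> = of_nat (card {k\<in>I. x k = 1})" by simp
  finally have "card {k\<in>I. x k = 1} = 1" using s by simp
  then obtain k0 where k0: "{k\<in>I. x k = 1} = {k0}" using card_1_singletonE by blast
  then show "\<exists>k. t - a * of_int m + b * of_int k \<in> {0..<c} \<and> x k = 1" by (auto simp: I_def)
  show "\<And>k k'. t - a * of_int m + b * of_int k \<in> {0..<c} \<Longrightarrow> x k = 1 \<Longrightarrow>
       t - a * of_int m + b * of_int k' \<in> {0..<c} \<Longrightarrow> x k' = 1 \<Longrightarrow> k = k'"
  proof -
    fix k k' assume "t - a * of_int m + b * of_int k \<in> {0..<c}" "x k = 1"
       "t - a * of_int m + b * of_int k' \<in> {0..<c}" "x k' = 1"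
    then have "k \<in> {k\<in>I. x k = 1}" "k' \<in> {k\<in>I. x k = 1}" by (auto simp: I_def)
    then show "k = k'" using k0 by auto
  qed
qed

end


context abc begin

lemma int_less_of_mult: "b * of_int d < b * of_int k \<Longrightarrow> d < k"
  using b_pos by (simp add: mult_less_cancel_left_pos)

lemma S_step:
  assumes x: "x \<in> B0" and M: "\<forall>m. M_apply a b c t x m = 1" and xp: "x p = 1"
  shows "\<not> (h \<le> ph (t + b * of_int p) \<and> ph (t + b * of_int p) < C)"
    and "\<exists>p'. x p' = 1 \<and> R a b c (t + b * of_int p) = t + b * of_int p'"
proof -
  define r where "r = t + b * of_int p"
  define m where "m = \<lfloor>r/a\<rfloor>"
  define u where "u = ph r"
  have r_eq: "r = u + a * of_int m" using ph_eq[of r] by (simp add: u_def m_def)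
  have u0: "0 \<le> u" "u < a" using ph_range by (auto simp: u_def)
  have ac: "a < c" using ab bc by simp
  have w0: "t - a * of_int m + b * of_int p \<in> {0..<c}" using r_eq u0 ac by (simp add: r_def)
  obtain j where j: "t - a * of_int (m+1) + b * of_int j \<in> {0..<c}" "x j = 1"
    using window(1)[OF x, of t "m+1"] M by blast
  have "j \<noteq> p"
  proof
    assume "j = p"
    then have "t - a * of_int (m+1) + b * of_int p = u - a" using r_eq by (simp add: r_def algebra_simps)
    then show False using j u0 \<open>j = p\<close> by simp
  qed
  then have nw: "t - a * of_int m + b * of_int j \<notin> {0..<c}"
    using window(2)[OF x, of t m] M w0 xp j(2) by blast
  define d where "d = j - p"
  have e1: "t - a * of_int (m+1) + b * of_int j = u + b * of_int d - a"
    using r_eq by (simp add: r_def d_def algebra_simps)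
  have e2: "t - a * of_int m + b * of_int j = u + b * of_int d"
    using r_eq by (simp add: r_def d_def algebra_simps)
  have lo: "c \<le> u + b * of_int d" using j(1) nw e1 e2 a_pos by auto
  have hi: "u + b * of_int d < c + a" using j(1) e1 by auto
  have ce: "c = b * of_int N + C" using c_eq by (simp add: mult.commute)
  show "\<not> (h \<le> ph (t + b * of_int p) \<and> ph (t + b * of_int p) < C)"
  proof
    assume "h \<le> ph (t + b * of_int p) \<and> ph (t + b * of_int p) < C"
    then have hu: "h \<le> u" "u < C" by (auto simp: u_def r_def)
    have "b * of_int N < b * of_int d" using lo hu ce by linarith
    then have "N < d" by (rule int_less_of_mult)
    moreover have "b * of_int d < b * of_int (N+1)" using hi hu ce by (simp add: h_def algebra_simps)
    then have "d < N + 1" by (rule int_less_of_mult)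
    ultimately show False by simp
  qed
  show "\<exists>p'. x p' = 1 \<and> R a b c (t + b * of_int p) = t + b * of_int p'"
  proof (cases "u < h")
    case True
    have "b * of_int N < b * of_int d" using lo True ce ab by (simp add: h_def algebra_simps)
    then have "N < d" by (rule int_less_of_mult)
    moreover have "b * of_int d < b * of_int (N+2)" using hi u0 ce ab C_up by (simp add: algebra_simps)
    then have "d < N + 2" by (rule int_less_of_mult)
    ultimately have "d = N + 1" by simp
    then have "R a b c r = t + b * of_int j" using R_low[of r] True
      by (simp add: u_def r_def d_def algebra_simps)
    then show ?thesis using j(2) by (auto simp: r_def)
  next
    case False
    then have "C \<le> u"
      using \<open>\<not> (h \<le> ph (t + b * of_int p) \<and> ph (t + b * of_int p) < C)\<close> by (auto simp: u_def r_def)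
    have "b * of_int (N - 1) < b * of_int d" using lo u0 ce ab C_low by (simp add: algebra_simps)
    then have "N - 1 < d" by (rule int_less_of_mult)
    moreover have "b * of_int d < b * of_int (N+1)" using hi u0 ce ab \<open>C \<le> u\<close> by (simp add: algebra_simps)
    then have "d < N + 1" by (rule int_less_of_mult)
    ultimately have "d = N" by simp
    then have "R a b c r = t + b * of_int j" using R_high[of r] \<open>C \<le> u\<close>
      by (simp add: u_def r_def d_def algebra_simps)
    then show ?thesis using j(2) by (auto simp: r_def)
  qed
qed

lemma S_orbit:
  assumes "t \<in> S_set a b c"
  shows "\<forall>k. \<not> (h \<le> ph ((R a b c ^^ k) t) \<and> ph ((R a b c ^^ k) t) < C)"
proof -
  obtain x where x: "x \<in> B0" and M: "\<forall>m. M_apply a b c t x m = 1"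
    using assms by (auto simp: S_set_def)
  have "\<exists>p. x p = 1 \<and> (R a b c ^^ k) t = t + b * of_int p" for k
  proof (induction k)
    case 0
    then show ?case using x by (auto simp: B0_def intro: exI[of _ 0])
  next
    case (Suc k)
    then obtain p where "x p = 1" "(R a b c ^^ k) t = t + b * of_int p" by blast
    then show ?case using S_step(2)[OF x M] by auto
  qed
  then show ?thesis using S_step(1)[OF x M] by metis
qed

end



lemma periodic_nat: assumes "\<forall>x. f (x + a) = f x" shows "f (x + a * of_nat n) = f x"
proof (induction n arbitrary: x)
  case 0 then show ?case by simp
next
  case (Suc n)
  have "f (x + a * of_nat (Suc n)) = f ((x + a * of_nat n) + a)" by (simp add: algebra_simps)
  also have "\<dots> = f x" using assms Suc by simp
  finally show ?case .
qed

lemma periodic_int: assumes "\<forall>x. f (x + a) = f x" shows "f (x + a * of_int n) = f (x::real)"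
proof (cases "n \<ge> 0")
  case True
  then obtain m where "n = int m" by (metis nonneg_int_cases)
  then show ?thesis using periodic_nat[OF assms, of x m] by simp
next
  case False
  define m where "m = nat (- n)"
  have m: "n = - int m" using False by (simp add: m_def)
  have "f x = f ((x - a * of_nat m) + a * of_nat m)" by simp
  also have "\<dots> = f (x - a * of_nat m)" by (rule periodic_nat[OF assms])
  finally have fx: "f (x - a * of_nat m) = f x" by (rule sym)
  have "x + a * of_int n = x - a * of_nat m" using m by simp
  then show ?thesis using fx by simp
qed

context abc begin

lemma trapped_conv:
  assumes "h \<le> ph ((R a b c ^^ k) t)" "ph ((R a b c ^^ k) t) < C"
  shows "\<exists>t0 \<in> {h..<C}. \<forall>f::real \<Rightarrow> complex. (\<forall>x. f (x + a) = f x) \<longrightarrow>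
     (\<lambda>n. (1/of_nat n) * (\<Sum>j<n. f ((R a b c ^^ j) t))) \<longlonglongrightarrow> f t0"
proof -
  define y where "y = (R a b c ^^ k) t"
  have Ry: "R a b c y = y" using R_hole assms by (simp add: y_def)
  have rj: "(R a b c ^^ (k + i)) t = y" for i
    by (induction i) (simp_all add: y_def[symmetric] Ry)
  have rj': "j \<ge> k \<Longrightarrow> (R a b c ^^ j) t = y" for j using rj[of "j - k"] by simp
  show ?thesis
  proof (intro bexI allI impI)
    show "ph y \<in> {h..<C}" using assms by (simp add: y_def)
    fix f :: "real \<Rightarrow> complex" assume per: "\<forall>x. f (x + a) = f x"
    have e: "ph y + a * of_int \<lfloor>y/a\<rfloor> = y" by (simp add: ph_def)
    have fy: "f y = f (ph y)" using periodic_int[OF per, of "ph y" "\<lfloor>y/a\<rfloor>"] unfolding e .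
    define A where "A = (\<Sum>j<k. f ((R a b c ^^ j) t) - f y)"
    have sumeq: "(\<Sum>j<n. f ((R a b c ^^ j) t)) = A + of_nat n * f y" if "n \<ge> k" for n
    proof -
      have "(\<Sum>j<n. f ((R a b c ^^ j) t)) = (\<Sum>j<n. f ((R a b c ^^ j) t) - f y) + of_nat n * f y"
        by (simp add: sum_subtractf)
      also have "(\<Sum>j<n. f ((R a b c ^^ j) t) - f y) = A"
        unfolding A_def using that by (intro sum.mono_neutral_right) (simp_all add: rj')
      finally show ?thesis .
    qed
    have ev: "\<forall>\<^sub>F n in sequentially. A * (1 / of_nat n) + f y =
              (1/of_nat n) * (\<Sum>j<n. f ((R a b c ^^ j) t))"
      using eventually_ge_at_top[of "max k 1"]
    proof (rule eventually_mono)
      fix n assume "max k 1 \<le> n"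
      then have nz: "(of_nat n :: complex) \<noteq> 0" by simp
      have "(1/of_nat n) * (\<Sum>j<n. f ((R a b c ^^ j) t)) = (1/of_nat n) * (A + of_nat n * f y)"
        using sumeq[of n] \<open>max k 1 \<le> n\<close> by simp
      also have "\<dots> = A * (1 / of_nat n) + f y" using nz by (simp add: distrib_left)
      finally show "A * (1 / of_nat n) + f y = (1/of_nat n) * (\<Sum>j<n. f ((R a b c ^^ j) t))" by simp
    qed
    have "(\<lambda>n. 1 / (of_nat n::complex)) \<longlonglongrightarrow> 0"
      using lim_inverse_n[where 'a=complex] by (simp add: inverse_eq_divide)
    then have "(\<lambda>n. A * (1 / of_nat n) + f y) \<longlonglongrightarrow> A * 0 + f y"
      by (intro tendsto_add tendsto_mult tendsto_const)
    then have "(\<lambda>n. A * (1 / of_nat n) + f y) \<longlonglongrightarrow> f (ph y)" using fy by simp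
    then show "(\<lambda>n. (1/of_nat n) * (\<Sum>j<n. f ((R a b c ^^ j) t))) \<longlonglongrightarrow> f (ph y)"
      by (rule Lim_transform_eventually[OF _ ev])
  qed
qed

end



definition "Zs = range (real_of_int)"

lemma infdist_ge: assumes "\<And>n::int. e \<le> \<bar>y - of_int n\<bar>" shows "e \<le> infdist y Zs"
proof -
  have "infdist y Zs = (INF z\<in>Zs. dist y z)" by (simp add: infdist_notempty Zs_def)
  also have "e \<le> \<dots>" by (rule cINF_greatest) (auto simp: Zs_def dist_real_def assms)
  finally show ?thesis .
qed

lemma infdist_lt: assumes "infdist y Zs < e" shows "\<exists>n::int. \<bar>y - of_int n\<bar> < e"
  using infdist_ge[of e y] assms by (meson not_le)

lemma infdist_shift_le: "infdist (y + of_int k) Zs \<le> infdist y Zs"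
proof -
  have "infdist y Zs = (INF z\<in>Zs. dist y z)" by (simp add: infdist_notempty Zs_def)
  also have "infdist (y + of_int k) Zs \<le> \<dots>"
  proof (rule cINF_greatest)
    show "Zs \<noteq> {}" by (simp add: Zs_def)
    fix z assume "z \<in> Zs"
    then obtain n where z: "z = of_int n" by (auto simp: Zs_def)
    have "infdist (y + of_int k) Zs \<le> dist (y + of_int k) (of_int (n + k))"
      by (rule infdist_le) (metis Zs_def of_int_add rangeI)
    also have "\<dots> = dist y z" using z by (simp add: dist_real_def)
    finally show "infdist (y + of_int k) Zs \<le> dist y z" .
  qed
  finally show ?thesis .
qed

lemma infdist_per: "infdist (y + 1) Zs = infdist y Zs"
proof (rule antisym)
  show "infdist (y + 1) Zs \<le> infdist y Zs" using infdist_shift_le[of y 1] by simp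
  show "infdist y Zs \<le> infdist (y + 1) Zs" using infdist_shift_le[of "y+1" "-1"] by simp
qed

context abc begin

lemma w_props:
  "of_int N * b + b = a * of_int (\<lfloor>of_int N * b / a\<rfloor> + 1) + (c1 a b c + b - a)"
  "0 < c1 a b c + b - a" "c1 a b c + b - a < a"
  using c1_pos c1_up ab by (auto simp: c1_def N_def algebra_simps)

lemma avoid_noconv:
  assumes av: "\<forall>k. \<not> (h \<le> ph ((R a b c ^^ k) t) \<and> ph ((R a b c ^^ k) t) < C)"
    and t0: "t0 \<in> {h..<C}"
  shows "\<exists>f::real \<Rightarrow> complex. continuous_on UNIV f \<and> (\<forall>x. f (x + a) = f x) \<and>
     \<not> ((\<lambda>n. (1/of_nat n) * (\<Sum>k<n. f ((R a b c ^^ k) t))) \<longlonglongrightarrow> f t0)"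
proof -
  define w where "w = c1 a b c + b - a"
  define fl where "fl = \<lfloor>of_int N * b / a\<rfloor> + 1"
  have wNb: "of_int N * b + b = a * of_int fl + w" and w0: "0 < w" "w < a"
    using w_props by (auto simp: w_def fl_def)
  define \<eta> where "\<eta> = min (min (C - t0) t0) (min w (a - w)) / 2"
  have t0': "h \<le> t0" "t0 < C" using t0 by auto
  have eta: "0 < \<eta>" "\<eta> \<le> (C - t0)/2" "\<eta> \<le> t0/2" "\<eta> \<le> w/2" "\<eta> \<le> (a-w)/2"
    using t0' h_pos w0 by (auto simp: \<eta>_def)
  define \<epsilon> where "\<epsilon> = \<eta> / a"
  have eps: "0 < \<epsilon>" using eta a_pos by (simp add: \<epsilon>_def)
  define g where "g y = max 0 (1 - infdist y Zs / \<epsilon>)" for y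
  define f where "f x = complex_of_real (g ((x - t0)/a))" for x
  define r where "r k = (R a b c ^^ k) t" for k
  define G where "G k = g ((r k - t0)/a)" for k
  have g01: "0 \<le> g y" "g y \<le> 1" for y using infdist_nonneg[of y Zs] eps
    by (auto simp: g_def)
  have cont: "continuous_on UNIV f" unfolding f_def g_def
    by (intro continuous_intros) (use eps a_pos in auto)
  have per: "\<forall>x. f (x + a) = f x"
  proof
    fix x
    have "(x + a - t0)/a = (x - t0)/a + 1" using a_pos by (simp add: field_simps)
    then show "f (x + a) = f x" by (simp add: f_def g_def infdist_per)
  qed
  have ft0: "f t0 = 1" by (simp add: f_def g_def Zs_def)
  have key: "G (Suc k) = 0" if pos: "G k > 0" for k
  proof -
    have "infdist ((r k - t0)/a) Zs < \<epsilon>"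
    proof (rule ccontr)
      assume "\<not> infdist ((r k - t0)/a) Zs < \<epsilon>"
      then have "infdist ((r k - t0)/a) Zs / \<epsilon> \<ge> 1" using eps by simp
      then show False using pos by (simp add: G_def g_def)
    qed
    then obtain n where "\<bar>(r k - t0)/a - of_int n\<bar> < \<epsilon>" using infdist_lt by blast
    then have lt: "\<bar>((r k - t0) - a * of_int n)/a\<bar> < \<eta> / a"
      using a_pos by (simp add: \<epsilon>_def diff_divide_distrib)
    have "\<bar>r k - t0 - a * of_int n\<bar> = a * \<bar>((r k - t0) - a * of_int n)/a\<bar>"
      using a_pos by (simp add: abs_divide)
    also have "\<dots> < a * (\<eta> / a)" using lt a_pos by (rule mult_strict_left_mono)
    finally have zn: "\<bar>r k - t0 - a * of_int n\<bar> < \<eta>" using a_pos by simp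
    define z where "z = r k - a * of_int n"
    have zb: "t0 - \<eta> < z" "z < t0 + \<eta>" using zn by (auto simp: z_def)
    have phz: "ph (r k) = z"
    proof -
      have "ph (r k) = ph (z + a * of_int n)" by (simp add: z_def)
      also have "\<dots> = ph z" by (rule ph_add_int)
      also have "\<dots> = z" using zb eta t0' C_up by (intro ph_id) auto
      finally show ?thesis .
    qed
    have "z < h" using av[rule_format, of k] phz zb eta t0' by (auto simp: r_def)
    then have Rk: "r (Suc k) = r k + of_int N * b + b" using R_low phz by (simp add: r_def)
    have "\<epsilon> \<le> infdist ((r (Suc k) - t0)/a) Zs"
    proof (rule infdist_ge)
      fix m :: int
      define j where "j = n + fl - m"
      have e: "r (Suc k) - t0 - a * of_int m = (z - t0) + (a * of_int j + w)"
        using Rk wNb by (simp add: z_def j_def algebra_simps)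
      have "\<bar>a * of_int j + w\<bar> \<ge> 2 * \<eta>"
      proof (cases "j \<ge> 0")
        case True
        then have "a * of_int j \<ge> 0" using a_pos by simp
        then show ?thesis using eta w0 by simp
      next
        case False
        then have "of_int j \<le> (-1::real)" by simp
        then have "a * of_int j \<le> a * (-1)" using a_pos by (intro mult_left_mono) auto
        then show ?thesis using eta w0 by simp
      qed
      then have "\<bar>r (Suc k) - t0 - a * of_int m\<bar> \<ge> \<eta>" using e zb by linarith
      then have "\<eta> / a \<le> \<bar>r (Suc k) - t0 - a * of_int m\<bar> / a" using a_pos by (simp add: divide_right_mono)
      also have "\<dots> = \<bar>(r (Suc k) - t0 - a * of_int m)/a\<bar>" using a_pos by (simp add: abs_divide)
      also have "(r (Suc k) - t0 - a * of_int m)/a = (r (Suc k) - t0)/a - of_int m"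
        using a_pos by (simp add: field_simps)
      finally show "\<epsilon> \<le> \<bar>(r (Suc k) - t0)/a - of_int m\<bar>" by (simp add: \<epsilon>_def)
    qed
    then have "1 - infdist ((r (Suc k) - t0)/a) Zs / \<epsilon> \<le> 0" using eps by simp
    then show ?thesis by (simp add: G_def g_def)
  qed
  have G01: "0 \<le> G k" "G k \<le> 1" for k using g01 by (auto simp: G_def)
  have pair: "G k + G (Suc k) \<le> 1" for k
    using key[of k] G01[of k] G01[of "Suc k"] by (cases "G k > 0") auto
  have bound: "2 * (\<Sum>k<n. G k) + G n \<le> of_nat n + 1" for n
  proof (induction n)
    case 0 then show ?case using G01[of 0] by simp
  next
    case (Suc n) then show ?case using pair[of n] by simp
  qed
  have seq: "(1/of_nat n) * (\<Sum>k<n. f ((R a b c ^^ k) t)) = complex_of_real ((\<Sum>k<n. G k) / of_nat n)" for n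
    by (simp add: f_def G_def r_def)
  show ?thesis
  proof (rule exI[of _ f], intro conjI cont per notI)
    assume conv: "(\<lambda>n. (1/of_nat n) * (\<Sum>k<n. f ((R a b c ^^ k) t))) \<longlonglongrightarrow> f t0"
    then have "(\<lambda>n. complex_of_real ((\<Sum>k<n. G k) / of_nat n)) \<longlonglongrightarrow> complex_of_real 1"
      unfolding seq ft0 by simp
    then have "(\<lambda>n. (\<Sum>k<n. G k) / of_nat n) \<longlonglongrightarrow> 1" by (simp only: tendsto_of_real_iff)
    then have "\<forall>\<^sub>F n in sequentially. (\<Sum>k<n. G k) / of_nat n > 3/4"
      by (rule order_tendstoD) simp
    then have "\<forall>\<^sub>F n in sequentially. n \<ge> 2 \<and> (\<Sum>k<n. G k) / of_nat n > 3/4"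
      using eventually_ge_at_top[of 2] by (simp add: eventually_conj_iff)
    then obtain M where M: "\<forall>n\<ge>M. n \<ge> 2 \<and> (\<Sum>k<n. G k) / of_nat n > 3/4"
      unfolding eventually_sequentially by blast
    then obtain n where n: "n \<ge> 2" "(\<Sum>k<n. G k) / of_nat n > 3/4" by blast
    have "2 * (\<Sum>k<n. G k) \<le> of_nat n + 1" using bound[of n] G01[of n] by simp
    moreover have "(\<Sum>k<n. G k) > 3/4 * of_nat n" using n by (simp add: field_simps)
    moreover have "real n \<ge> 2" using n by simp
    ultimately show False by linarith
  qed
qed

end


context abc begin

definition "D0 x \<longleftrightarrow> (0 \<le> x \<and> x < h) \<or> (C \<le> x \<and> x < a)"
definition "rho x = (if x < h then ph (x + of_int N * b + b) else ph (x + of_int N * b))"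
definition "RAcc (\<phi>::nat \<Rightarrow> real) \<tau> \<longleftrightarrow> (\<forall>\<epsilon>>0. \<forall>M. \<exists>n\<ge>M. \<tau> \<le> \<phi> n \<and> \<phi> n < \<tau> + \<epsilon>)"

lemma ph_small: assumes "0 \<le> q" "q < a" "0 \<le> d" "d < a"
  shows "ph (q + d) = q + d \<or> ph (q + d) < d"
proof (cases "q + d < a")
  case True then show ?thesis using assms ph_id by auto
next
  case False
  then have "ph (q + d) = q + d - a" using assms by (intro ph_unique[where n=1]) auto
  then show ?thesis using assms by auto
qed

lemma pair_step: assumes "D0 x" "D0 (x + d)" "0 < d" "d < b - a"
  shows "rho (x + d) = rho x + d \<or> rho (x + d) < d"
proof -
  have da: "d < a" using assms C_low C_up by linarith
  show ?thesis
  proof (cases "x < h")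
    case True
    then have "x + d < C" using assms by (simp add: h_def)
    then have "x + d < h" using assms(2) by (auto simp: D0_def)
    have "rho (x + d) = ph (ph (x + of_int N * b + b) + d)"
      using \<open>x + d < h\<close> True ph_add[of "x + of_int N * b + b" d] by (simp add: rho_def algebra_simps)
    moreover have "rho x = ph (x + of_int N * b + b)" using True by (simp add: rho_def)
    ultimately show ?thesis using ph_small[of "ph (x + of_int N * b + b)" d] ph_range assms da by auto
  next
    case False
    then have "\<not> x + d < h" using assms by simp
    have "rho (x + d) = ph (ph (x + of_int N * b) + d)"
      using \<open>\<not> x + d < h\<close> ph_add[of "x + of_int N * b" d] by (simp add: rho_def algebra_simps)
    moreover have "rho x = ph (x + of_int N * b)" using False by (simp add: rho_def)
    ultimately show ?thesis using ph_small[of "ph (x + of_int N * b)" d] ph_range assms da by auto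
  qed
qed

lemma pair_iter:
  assumes orb: "\<forall>n. D0 (\<phi> n) \<and> \<phi> (Suc n) = rho (\<phi> n)"
    and d: "0 < d" "d < b - a" and ij: "\<phi> j = \<phi> i + d"
  shows "\<phi> (j + k) = \<phi> (i + k) + d \<or> (\<exists>k'\<le>k. \<phi> (j + k') < d)"
proof (induction k)
  case 0 then show ?case using ij by simp
next
  case (Suc k)
  then show ?case
  proof
    assume e: "\<phi> (j + k) = \<phi> (i + k) + d"
    have "rho (\<phi> (i + k) + d) = rho (\<phi> (i + k)) + d \<or> rho (\<phi> (i + k) + d) < d"
      using orb e d by (intro pair_step) (metis)+
    then show ?case using orb e by (metis add_Suc_right le_refl)
  next
    assume "\<exists>k'\<le>k. \<phi> (j + k') < d"
    then show ?case using le_SucI by blast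
  qed
qed

lemma periodic_RAcc:
  assumes orb: "\<forall>n. \<phi> (Suc n) = rho (\<phi> n)" and ij: "i < j" "\<phi> i = \<phi> j"
  shows "RAcc \<phi> (\<phi> i)"
proof -
  define P where "P = j - i"
  have P: "P \<ge> 1" "\<phi> (i + P) = \<phi> i" using ij by (auto simp: P_def)
  have sh: "\<phi> (i + r + P) = \<phi> (i + r)" for r
  proof (induction r)
    case 0 then show ?case using P by simp
  next
    case (Suc r)
    have "\<phi> (i + Suc r + P) = rho (\<phi> (i + r + P))" using orb by (metis add_Suc add_Suc_right)
    also have "\<dots> = \<phi> (i + Suc r)" using Suc orb by simp
    finally show ?case .
  qed
  have q: "\<phi> (i + q * P) = \<phi> i" for q
  proof (induction q)
    case 0 then show ?case by simp
  next
    case (Suc q)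
    have "\<phi> (i + Suc q * P) = \<phi> (i + q * P + P)" by (simp add: algebra_simps)
    also have "\<dots> = \<phi> (i + q * P)" by (rule sh)
    finally show ?case using Suc by simp
  qed
  show ?thesis unfolding RAcc_def
  proof (intro allI impI)
    fix \<epsilon> :: real and M :: nat assume "\<epsilon> > 0"
    have "i + M * P \<ge> M" using P by (metis le_add2 le_trans mult_le_mono2 nat_mult_1_right)
    then show "\<exists>n\<ge>M. \<phi> i \<le> \<phi> n \<and> \<phi> n < \<phi> i + \<epsilon>" using q[of M] \<open>\<epsilon> > 0\<close> by (intro exI[of _ "i + M*P"]) auto
  qed
qed

lemma exists_RAcc:
  assumes orb: "\<forall>n. D0 (\<phi> n) \<and> \<phi> (Suc n) = rho (\<phi> n)"
  shows "\<exists>\<tau>. RAcc \<phi> \<tau>"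
proof (cases "inj \<phi>")
  case False
  then obtain i j where "i \<noteq> j" "\<phi> i = \<phi> j" unfolding inj_def by blast
  then have "\<exists>i j. i < j \<and> \<phi> i = \<phi> j" by (metis linorder_neqE_nat)
  then show ?thesis using periodic_RAcc orb by blast
next
  case inj: True
  have "bounded (range \<phi>)"
  proof -
    have "\<bar>\<phi> n\<bar> \<le> a" for n
    proof -
      have "D0 (\<phi> n)" using orb by blast
      then show ?thesis using h_C C_up h_pos by (auto simp: D0_def)
    qed
    then have "range \<phi> \<subseteq> cball 0 a" by (auto simp: dist_real_def)
    then show ?thesis using bounded_cball bounded_subset by blast
  qed
  then obtain l r where r: "strict_mono r" "(\<phi> \<circ> r) \<longlonglongrightarrow> l"
    using bounded_imp_convergent_subsequence by blast
  have acc: "\<exists>n\<ge>M. \<bar>\<phi> n - l\<bar> < e" if "e > 0" for e M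
  proof -
    have "\<forall>\<^sub>F n in sequentially. dist ((\<phi> \<circ> r) n) l < e" using r(2) that by (rule tendstoD)
    then obtain K where K: "\<forall>n\<ge>K. dist (\<phi> (r n)) l < e" unfolding eventually_sequentially by auto
    have "r (max K M) \<ge> M" using seq_suble[OF r(1), of "max K M"] by simp
    then show ?thesis using K[rule_format, of "max K M"] by (auto simp: dist_real_def)
  qed
  show ?thesis
  proof (cases "RAcc \<phi> l")
    case True then show ?thesis by blast
  next
    case False
    then obtain \<epsilon>0 M0 where e0: "\<epsilon>0 > 0" and M0: "\<forall>n\<ge>M0. \<not> (l \<le> \<phi> n \<and> \<phi> n < l + \<epsilon>0)"
      unfolding RAcc_def by auto
    have "RAcc \<phi> 0" unfolding RAcc_def
    proof (intro allI impI)
      fix \<epsilon> :: real and M :: nat assume \<epsilon>: "\<epsilon> > 0"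
      define \<delta> where "\<delta> = min \<epsilon> (min \<epsilon>0 (b - a))"
      have \<delta>: "\<delta> > 0" "\<delta> \<le> \<epsilon>" "\<delta> \<le> \<epsilon>0" "\<delta> \<le> b - a" using \<epsilon> e0 ab by (auto simp: \<delta>_def)
      obtain i where i: "i \<ge> max M M0" "\<bar>\<phi> i - l\<bar> < \<delta>" using acc[OF \<delta>(1)] by blast
      obtain j where j: "j \<ge> Suc i" "\<bar>\<phi> j - l\<bar> < \<delta>" using acc[OF \<delta>(1)] by blast
      have il: "\<phi> i < l" using M0 i \<delta> by force
      have "j \<ge> M0" using i j by simp
      then have jl: "\<phi> j < l" using M0 j \<delta> by force
      have "\<phi> i \<noteq> \<phi> j" using inj j(1) by (metis Suc_le_eq inj_eq less_irrefl)
      have "\<exists>i' j'. i' \<ge> max M M0 \<and> j' \<ge> max M M0 \<and> \<phi> i' < \<phi> j' \<and>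
          l - \<delta> < \<phi> i' \<and> \<phi> j' < l"
      proof (cases "\<phi> i < \<phi> j")
        case True
        then show ?thesis using i j il jl by (intro exI[of _ i] exI[of _ j]) (auto simp: abs_less_iff)
      next
        case False
        then have "\<phi> j < \<phi> i" using \<open>\<phi> i \<noteq> \<phi> j\<close> by linarith
        then show ?thesis using i j il jl by (intro exI[of _ j] exI[of _ i]) (auto simp: abs_less_iff)
      qed
      then obtain i' j' where ij': "i' \<ge> max M M0" "j' \<ge> max M M0" "\<phi> i' < \<phi> j'"
          "l - \<delta> < \<phi> i'" "\<phi> j' < l" by blast
      define d where "d = \<phi> j' - \<phi> i'"
      have d: "0 < d" "d < \<delta>" using ij' by (auto simp: d_def)
      obtain n where n: "n \<ge> max i' M0" "\<bar>\<phi> n - l\<bar> < d" using acc[OF d(1)] by blast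
      have "n \<ge> M0" using n by simp
      then have nl: "\<phi> n < l" using M0 n d \<delta> by force
      define k where "k = n - i'"
      have nk: "i' + k = n" using n by (simp add: k_def)
      have "\<phi> (j' + k) = \<phi> (i' + k) + d \<or> (\<exists>k'\<le>k. \<phi> (j' + k') < d)"
      proof -
        have dba: "d < b - a" using d \<delta> by simp
        have "\<phi> j' = \<phi> i' + d" by (simp add: d_def)
        from pair_iter[OF orb d(1) dba this] show ?thesis .
      qed
      then show "\<exists>n\<ge>M. 0 \<le> \<phi> n \<and> \<phi> n < 0 + \<epsilon>"
      proof
        assume "\<phi> (j' + k) = \<phi> (i' + k) + d"
        then have "l \<le> \<phi> (j' + k) \<and> \<phi> (j' + k) < l + \<epsilon>0" using nk n nl d \<delta> by auto
        moreover have "j' + k \<ge> M0" using ij' by simp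
        ultimately show ?thesis using M0 by blast
      next
        assume "\<exists>k'\<le>k. \<phi> (j' + k') < d"
        then obtain k' where "\<phi> (j' + k') < d" by blast
        moreover have "j' + k' \<ge> M" using ij' by simp
        moreover have "0 \<le> \<phi> (j' + k')"
        proof -
          have "D0 (\<phi> (j' + k'))" using orb by blast
          then show ?thesis using C_low ab by (auto simp: D0_def)
        qed
        ultimately show ?thesis using d \<delta> by (intro exI[of _ "j' + k'"]) auto
      qed
    qed
    then show ?thesis by blast
  qed
qed

end


context abc begin

definition "rlim (z::nat \<Rightarrow> real) \<tau> \<longleftrightarrow> (\<forall>\<epsilon>>0. \<forall>\<^sub>F n in sequentially. \<tau> \<le> z n \<and> z n < \<tau> + \<epsilon>)"
definition "Aset y \<longleftrightarrow> ph (y - of_int N * b - b) < 2*a - b"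
definition "rhoinv y = (if ph (y - of_int N * b - b) < h then ph (y - of_int N * b - b)
                        else ph (y - of_int N * b - b) + (b - a))"

lemma ph_diff: "ph (ph x - y) = ph (x - y)" using ph_add[of x "-y"] by simp

lemma rho_range: "0 \<le> rho x" "rho x < a" using ph_range by (auto simp: rho_def)

lemma F1: assumes "D0 x" shows "Aset (rho x)" "rhoinv (rho x) = x"
proof -
  have h2: "h < 2*a - b" using C_up by (simp add: h_def)
  have "Aset (rho x) \<and> rhoinv (rho x) = x"
  proof (cases "x < h")
    case True
    then have x0: "0 \<le> x" using assms h_C by (auto simp: D0_def)
    have "ph (rho x - of_int N * b - b) = ph (x + of_int N * b + b - (of_int N * b + b))"
      using True ph_diff[of "x + of_int N * b + b" "of_int N * b + b"] by (simp add: rho_def diff_diff_eq)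
    also have "\<dots> = x" using x0 True h_C C_up ph_id[of x] by simp
    finally show ?thesis using True h2 by (simp add: Aset_def rhoinv_def)
  next
    case False
    then have x0: "C \<le> x" "x < a" using assms by (auto simp: D0_def)
    have "ph (rho x - of_int N * b - b) = ph (x + of_int N * b - (of_int N * b + b))"
      using False ph_diff[of "x + of_int N * b" "of_int N * b + b"] by (simp add: rho_def diff_diff_eq)
    also have "\<dots> = x - b + a" using x0 C_low ab by (intro ph_unique[where n="-1"]) auto
    finally show ?thesis using x0 False by (simp add: Aset_def rhoinv_def h_def)
  qed
  then show "Aset (rho x)" "rhoinv (rho x) = x" by auto
qed

lemma F2: assumes "Aset y" "0 \<le> y" "y < a" shows "D0 (rhoinv y)" "rho (rhoinv y) = y"
proof -
  define g where "g = ph (y - of_int N * b - b)"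
  have g: "0 \<le> g" "g < 2*a - b" using assms ph_range by (auto simp: g_def Aset_def)
  have "D0 (rhoinv y) \<and> rho (rhoinv y) = y"
  proof (cases "g < h")
    case True
    then have "rho (rhoinv y) = ph (g + of_int N * b + b)" by (simp add: rhoinv_def rho_def g_def[symmetric])
    also have "\<dots> = ph (y - of_int N * b - b + of_int N * b + b)"
      using ph_add[of "y - of_int N * b - b" "of_int N * b + b"] by (simp add: g_def add.assoc)
    also have "\<dots> = y" using assms by (simp add: ph_id)
    finally show ?thesis using True g by (simp add: D0_def rhoinv_def g_def[symmetric])
  next
    case False
    then have ri: "rhoinv y = g + (b - a)" by (simp add: rhoinv_def g_def[symmetric])
    have "\<not> g + (b - a) < h" using False ab by simp
    then have "rho (rhoinv y) = ph (g + (b - a) + of_int N * b)" by (simp add: rho_def ri)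
    also have "\<dots> = ph (y - of_int N * b - b + ((b - a) + of_int N * b))"
      using ph_add[of "y - of_int N * b - b" "(b - a) + of_int N * b"] by (simp add: g_def add.assoc)
    also have "\<dots> = ph (y + a * of_int (-1))" by (simp add: algebra_simps)
    also have "\<dots> = y" using assms by (simp only: ph_add_int ph_id)
    finally show ?thesis using False g ri by (simp add: D0_def h_def)
  qed
  then show "D0 (rhoinv y)" "rho (rhoinv y) = y" by auto
qed

lemma rlim_cong: assumes "rlim z \<tau>" "\<forall>\<^sub>F n in sequentially. z n = z' n" shows "rlim z' \<tau>"
  unfolding rlim_def
proof (intro allI impI)
  fix \<epsilon> :: real assume "\<epsilon> > 0"
  then have "\<forall>\<^sub>F n in sequentially. \<tau> \<le> z n \<and> z n < \<tau> + \<epsilon>" using assms(1) by (simp add: rlim_def)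
  then show "\<forall>\<^sub>F n in sequentially. \<tau> \<le> z' n \<and> z' n < \<tau> + \<epsilon>"
    using assms(2) by eventually_elim auto
qed

lemma rlim_add: assumes "rlim z \<tau>" shows "rlim (\<lambda>n. z n + s) (\<tau> + s)"
  unfolding rlim_def
proof (intro allI impI)
  fix \<epsilon> :: real assume "\<epsilon> > 0"
  then have "\<forall>\<^sub>F n in sequentially. \<tau> \<le> z n \<and> z n < \<tau> + \<epsilon>" using assms(1) by (simp add: rlim_def)
  then show "\<forall>\<^sub>F n in sequentially. \<tau> + s \<le> z n + s \<and> z n + s < \<tau> + s + \<epsilon>"
    by eventually_elim auto
qed

lemma rlim_ph: assumes "rlim z \<tau>" shows "rlim (\<lambda>n. ph (z n + s)) (ph (\<tau> + s))"
  unfolding rlim_def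
proof (intro allI impI)
  fix \<epsilon> :: real assume "\<epsilon> > 0"
  define q where "q = ph (\<tau> + s)"
  define k where "k = \<lfloor>(\<tau> + s)/a\<rfloor>"
  have ts: "\<tau> + s = q + a * of_int k" using ph_eq[of "\<tau> + s"] by (simp add: q_def k_def)
  have q: "0 \<le> q" "q < a" using ph_range by (auto simp: q_def)
  define \<delta> where "\<delta> = min \<epsilon> (a - q)"
  have "\<delta> > 0" using q \<open>\<epsilon> > 0\<close> by (simp add: \<delta>_def)
  then have "\<forall>\<^sub>F n in sequentially. \<tau> \<le> z n \<and> z n < \<tau> + \<delta>" using assms(1) by (simp add: rlim_def)
  then show "\<forall>\<^sub>F n in sequentially. q \<le> ph (z n + s) \<and> ph (z n + s) < q + \<epsilon>"
  proof eventually_elim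
    case (elim n)
    have "ph (z n + s) = q + (z n - \<tau>)"
    proof (rule ph_unique[where n=k])
      show "0 \<le> q + (z n - \<tau>)" using elim q by simp
      have "\<delta> \<le> a - q" by (simp add: \<delta>_def)
      then show "q + (z n - \<tau>) < a" using elim q by linarith
      show "z n + s = q + (z n - \<tau>) + a * of_int k" using ts by simp
    qed
    moreover have "\<delta> \<le> \<epsilon>" by (simp add: \<delta>_def)
    ultimately show ?case using elim by simp
  qed
qed

lemma rlim_D0: assumes "rlim z \<tau>" "\<forall>\<^sub>F n in sequentially. D0 (z n)" shows "D0 \<tau>"
proof (rule ccontr)
  assume nd: "\<not> D0 \<tau>"
  define \<epsilon> where "\<epsilon> = (if \<tau> < 0 then - \<tau> else if \<tau> < C then C - \<tau> else 1)"
  have "\<epsilon> > 0" using nd by (auto simp: \<epsilon>_def D0_def)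
  then have "\<forall>\<^sub>F n in sequentially. \<tau> \<le> z n \<and> z n < \<tau> + \<epsilon>" using assms(1) by (simp add: rlim_def)
  then have "\<forall>\<^sub>F n in sequentially. False" using assms(2)
  proof eventually_elim
    case (elim n)
    then show False using nd h_C C_low ab by (auto simp: D0_def \<epsilon>_def split: if_splits)
  qed
  then show False by simp
qed

lemma rlim_rho: assumes "rlim z \<tau>" "\<forall>\<^sub>F n in sequentially. D0 (z n)"
  shows "rlim (\<lambda>n. rho (z n)) (rho \<tau>)"
proof -
  have D: "D0 \<tau>" by (rule rlim_D0[OF assms])
  show ?thesis
  proof (cases "\<tau> < h")
    case True
    have "h - \<tau> > 0" using True by simp
    have ev: "\<forall>\<^sub>F n in sequentially. \<tau> \<le> z n \<and> z n < \<tau> + (h - \<tau>)"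
      using assms(1)[unfolded rlim_def, rule_format, OF \<open>h - \<tau> > 0\<close>] .
    have "rlim (\<lambda>n. ph (z n + (of_int N * b + b))) (ph (\<tau> + (of_int N * b + b)))" by (rule rlim_ph[OF assms(1)])
    moreover have "\<forall>\<^sub>F n in sequentially. ph (z n + (of_int N * b + b)) = rho (z n)"
      using ev by eventually_elim (auto simp: rho_def add.assoc)
    ultimately have "rlim (\<lambda>n. rho (z n)) (ph (\<tau> + (of_int N * b + b)))" by (rule rlim_cong)
    then show ?thesis using True by (simp add: rho_def add.assoc)
  next
    case False
    have ev: "\<forall>\<^sub>F n in sequentially. \<tau> \<le> z n \<and> z n < \<tau> + 1" using assms(1) by (simp add: rlim_def)
    have "rlim (\<lambda>n. ph (z n + (of_int N * b))) (ph (\<tau> + (of_int N * b)))" by (rule rlim_ph[OF assms(1)])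
    moreover have "\<forall>\<^sub>F n in sequentially. ph (z n + (of_int N * b)) = rho (z n)"
      using ev by eventually_elim (use False in \<open>auto simp: rho_def\<close>)
    ultimately have "rlim (\<lambda>n. rho (z n)) (ph (\<tau> + (of_int N * b)))" by (rule rlim_cong)
    then show ?thesis using False by (simp add: rho_def)
  qed
qed

lemma rlim_A: assumes "rlim z \<tau>" "\<forall>\<^sub>F n in sequentially. Aset (z n) \<and> 0 \<le> z n \<and> z n < a"
  shows "Aset \<tau> \<and> 0 \<le> \<tau> \<and> \<tau> < a" and "rlim (\<lambda>n. rhoinv (z n)) (rhoinv \<tau>)"
proof -
  define s where "s = - of_int N * b - b"
  have sx: "\<And>y. y + s = y - of_int N * b - b" by (simp add: s_def)
  have gl: "rlim (\<lambda>n. ph (z n + s)) (ph (\<tau> + s))" by (rule rlim_ph[OF assms(1)])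
  have ev1: "\<forall>\<^sub>F n in sequentially. \<tau> \<le> z n \<and> z n < \<tau> + 1" using assms(1) by (simp add: rlim_def)
  have ev2: "\<forall>\<^sub>F n in sequentially. ph (\<tau> + s) \<le> ph (z n + s) \<and> ph (z n + s) < ph (\<tau> + s) + 1"
    using gl by (simp add: rlim_def)
  have "\<forall>\<^sub>F n in sequentially. Aset \<tau> \<and> 0 \<le> \<tau> \<and> \<tau> < a" using ev1 ev2 assms(2)
  proof eventually_elim
    case (elim n)
    have "ph (\<tau> - of_int N * b - b) \<le> ph (z n - of_int N * b - b)" using elim unfolding sx by simp
    moreover have "ph (z n - of_int N * b - b) < 2*a - b" using elim by (simp add: Aset_def)
    moreover have "0 \<le> \<tau>"
    proof (rule ccontr)
      assume "\<not> 0 \<le> \<tau>"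
      then have "0 < - \<tau>" by simp
      have "\<forall>\<^sub>F n in sequentially. \<tau> \<le> z n \<and> z n < \<tau> + (- \<tau>)"
        using assms(1)[unfolded rlim_def, rule_format, OF \<open>0 < - \<tau>\<close>] .
      then have "\<forall>\<^sub>F n in sequentially. False" using assms(2) by eventually_elim auto
      then show False by simp
    qed
    ultimately show ?case using elim by (auto simp: Aset_def)
  qed
  then show At: "Aset \<tau> \<and> 0 \<le> \<tau> \<and> \<tau> < a" by simp
  show "rlim (\<lambda>n. rhoinv (z n)) (rhoinv \<tau>)"
  proof (cases "ph (\<tau> + s) < h")
    case True
    have "h - ph (\<tau> + s) > 0" using True by simp
    have ev: "\<forall>\<^sub>F n in sequentially. ph (\<tau> + s) \<le> ph (z n + s) \<and> ph (z n + s) < ph (\<tau> + s) + (h - ph (\<tau> + s))"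
      using gl[unfolded rlim_def, rule_format, OF \<open>h - ph (\<tau> + s) > 0\<close>] .
    have "\<forall>\<^sub>F n in sequentially. ph (z n + s) = rhoinv (z n)"
      using ev by eventually_elim (auto simp: rhoinv_def sx)
    from rlim_cong[OF gl this] show ?thesis using True
      by (simp add: rhoinv_def sx)
  next
    case False
    have gl2: "rlim (\<lambda>n. ph (z n + s) + (b - a)) (ph (\<tau> + s) + (b - a))" by (rule rlim_add[OF gl])
    have "\<forall>\<^sub>F n in sequentially. ph (z n + s) + (b - a) = rhoinv (z n)"
      using ev2 by eventually_elim (use False in \<open>auto simp: rhoinv_def sx\<close>)
    from rlim_cong[OF gl2 this] show ?thesis using False
      by (simp add: rhoinv_def sx)
  qed
qed

end


context abc begin

lemma chain_exists:
  assumes orb: "\<forall>n. D0 (\<phi> n) \<and> \<phi> (Suc n) = rho (\<phi> n)" and RA: "RAcc \<phi> \<tau>"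
  shows "\<exists>v::int \<Rightarrow> real. \<forall>k. D0 (v k) \<and> v (k+1) = rho (v k)"
proof -
  define m where "m n = (SOME k. k \<ge> n \<and> \<tau> \<le> \<phi> k \<and> \<phi> k < \<tau> + 1/(Suc n))" for n
  have m: "m n \<ge> n \<and> \<tau> \<le> \<phi> (m n) \<and> \<phi> (m n) < \<tau> + 1/(Suc n)" for n
  proof -
    have "\<exists>k. k \<ge> n \<and> \<tau> \<le> \<phi> k \<and> \<phi> k < \<tau> + 1/(Suc n)"
      using RA unfolding RAcc_def by (metis of_nat_0_less_iff zero_less_Suc zero_less_divide_1_iff)
    then show ?thesis unfolding m_def by (rule someI_ex)
  qed
  have D: "D0 (\<phi> n)" for n using orb by blast
  have rl0: "rlim (\<lambda>n. \<phi> (m n)) \<tau>" unfolding rlim_def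
  proof (intro allI impI)
    fix \<epsilon> :: real assume "\<epsilon> > 0"
    have "(\<lambda>n. inverse (real (Suc n))) \<longlonglongrightarrow> 0" by (rule LIMSEQ_inverse_real_of_nat)
    then have "\<forall>\<^sub>F n in sequentially. inverse (real (Suc n)) < \<epsilon>" using \<open>\<epsilon> > 0\<close> by (rule order_tendstoD)
    then show "\<forall>\<^sub>F n in sequentially. \<tau> \<le> \<phi> (m n) \<and> \<phi> (m n) < \<tau> + \<epsilon>"
    proof eventually_elim
      case (elim n)
      then show ?case using m[of n] by (simp add: inverse_eq_divide)
    qed
  qed
  have fw: "rlim (\<lambda>n. \<phi> (m n + j)) ((rho^^j) \<tau>)" for j
  proof (induction j)
    case 0 then show ?case using rl0 by simp
  next
    case (Suc j)
    have "rlim (\<lambda>n. rho (\<phi> (m n + j))) (rho ((rho^^j) \<tau>))" using Suc D by (intro rlim_rho) auto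
    then show ?case using orb by simp
  qed
  have fwD: "D0 ((rho^^j) \<tau>)" for j using rlim_D0[OF fw[of j]] D by auto
  have evA: "\<forall>\<^sub>F n in sequentially. (Aset (\<phi> (m n - j)) \<and> 0 \<le> \<phi> (m n - j) \<and> \<phi> (m n - j) < a)
      \<and> \<phi> (m n - Suc j) = rhoinv (\<phi> (m n - j))" for j
    using eventually_ge_at_top[of "Suc j"]
  proof eventually_elim
    case (elim n)
    then have "m n \<ge> Suc j" using m[of n] by linarith
    then have e: "\<phi> (m n - j) = rho (\<phi> (m n - Suc j))" using orb by (metis Suc_diff_Suc Suc_le_lessD)
    show ?case unfolding e using F1[OF D] rho_range by auto
  qed
  have bw: "rlim (\<lambda>n. \<phi> (m n - j)) ((rhoinv^^j) \<tau>)" for j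
  proof (induction j)
    case 0 then show ?case using rl0 by simp
  next
    case (Suc j)
    have "rlim (\<lambda>n. rhoinv (\<phi> (m n - j))) (rhoinv ((rhoinv^^j) \<tau>))"
      using rlim_A(2)[OF Suc] evA[of j] by (simp add: eventually_conj_iff)
    moreover have "\<forall>\<^sub>F n in sequentially. rhoinv (\<phi> (m n - j)) = \<phi> (m n - Suc j)"
      using evA[of j] by eventually_elim simp
    ultimately show ?case by (simp add: rlim_cong)
  qed
  have bwA: "Aset ((rhoinv^^j) \<tau>) \<and> 0 \<le> (rhoinv^^j) \<tau> \<and> (rhoinv^^j) \<tau> < a" for j
    using rlim_A(1)[OF bw[of j]] evA[of j] by (simp add: eventually_conj_iff)
  have bwD: "D0 ((rhoinv^^j) \<tau>)" for j using rlim_D0[OF bw[of j]] D by auto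
  have bwR: "rho ((rhoinv^^Suc j) \<tau>) = (rhoinv^^j) \<tau>" for j using F2(2) bwA[of j] by simp
  define v where "v k = (if 0 \<le> k then (rho^^nat k) \<tau> else (rhoinv^^nat (-k)) \<tau>)" for k :: int
  have "D0 (v k) \<and> v (k+1) = rho (v k)" for k
  proof (cases "0 \<le> k")
    case True
    then have "nat (k+1) = Suc (nat k)" by simp
    then show ?thesis using True fwD by (simp add: v_def)
  next
    case False
    define j where "j = nat (- k - 1)"
    have k: "nat (-k) = Suc j" using False by (simp add: j_def)
    have vk: "v k = (rhoinv^^Suc j) \<tau>" using False k by (simp add: v_def)
    have "v (k+1) = (rhoinv^^j) \<tau>"
    proof (cases "k + 1 = 0")
      case True then show ?thesis by (simp add: v_def j_def)
    next
      case False then show ?thesis using \<open>\<not> 0 \<le> k\<close> by (simp add: v_def j_def nat_diff_distrib)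
    qed
    then show ?thesis using vk bwD[of "Suc j"] bwR[of j] by simp
  qed
  then show ?thesis by blast
qed

end



lemma int_transition:
  assumes "P (k0::int)" "\<not> P (k0 + int n)"
  shows "\<exists>k. P k \<and> \<not> P (k + 1)"
  using assms
proof (induction n arbitrary: k0)
  case 0 then show ?case by simp
next
  case (Suc n)
  show ?case
  proof (cases "P (k0 + 1)")
    case True
    have "\<not> P ((k0 + 1) + int n)" using Suc.prems by (simp add: add.assoc)
    then show ?thesis using Suc.IH True by blast
  next
    case False then show ?thesis using Suc.prems by blast
  qed
qed

context abc begin

lemma ph_cancel: "ph (x + s) = ph (y + s) \<Longrightarrow> ph x = ph y"
  by (metis ph_diff add_diff_cancel_right')

lemma int_less_mult_a: "a * of_int n < a * of_int m \<Longrightarrow> n < m"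
  using a_pos by (simp add: mult_less_cancel_left_pos)

lemma chain_S:
  fixes v :: "int \<Rightarrow> real"
  assumes ch: "\<forall>k. D0 (v k) \<and> v (k+1) = rho (v k)"
  shows "v 0 \<in> S_set a b c"
proof -
  define \<tau> where "\<tau> = v 0"
  define G where "G k = (if v k < h then N + 1 else N)" for k
  define p where "p k = (if 0 \<le> k then (\<Sum>i\<in>{0..<k}. G i) else - (\<Sum>i\<in>{k..<0}. G i))" for k
  have G2: "G k \<ge> 2" for k using N2' by (simp add: G_def)
  have pstep: "p (k+1) = p k + G k" for k
  proof (cases "0 \<le> k")
    case True
    have "{0..<k+1} = insert k {0..<k}" using True by auto
    then show ?thesis using True by (simp add: p_def add.commute)
  next
    case False
    have "{k..<0} = insert k {k+1..<0}" using False by auto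
    then have s: "(\<Sum>i\<in>{k..<0}. G i) = G k + (\<Sum>i\<in>{k+1..<0}. G i)" by simp
    have "p (k+1) = - (\<Sum>i\<in>{k+1..<0}. G i)"
      using False by (cases "k + 1 = 0") (auto simp: p_def)
    then show ?thesis using False s by (simp add: p_def)
  qed
  define r where "r k = \<tau> + b * of_int (p k)" for k
  have rstep: "r (k+1) = r k + b * of_int (G k)" for k unfolding r_def pstep by (simp add: distrib_left)
  have D: "D0 (v k)" for k using ch by blast
  have vrange: "0 \<le> v k \<and> v k < a" for k using D[of k] h_C C_low C_up ab by (auto simp: D0_def)
  have vstep: "v (k+1) = ph (v k + b * of_int (G k))" for k
  proof -
    have vr: "v (k+1) = rho (v k)" using ch by blast
    show ?thesis
    proof (cases "v k < h")
      case True
      have gk: "G k = N + 1" by (simp add: G_def True)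
      show ?thesis using vr True by (simp add: rho_def gk distrib_left mult.commute add.assoc)
    next
      case False
      have gk: "G k = N" by (simp add: G_def False)
      show ?thesis using vr False by (simp add: rho_def gk mult.commute)
    qed
  qed
  have phr: "ph (r k) = v k" for k
  proof (induction k rule: int_induct[where k=0])
    case base then show ?case using vrange[of 0] by (simp add: r_def p_def \<tau>_def ph_id)
  next
    case (step1 i)
    have "ph (r (i+1)) = ph (ph (r i) + b * of_int (G i))" using ph_add rstep by simp
    then show ?case using step1 vstep by simp
  next
    case (step2 i)
    have "ph (r (i - 1) + b * of_int (G (i-1))) = ph (r i)" using rstep[of "i-1"] by simp
    also have "\<dots> = v i" using step2 by simp
    also have "\<dots> = ph (v (i-1) + b * of_int (G (i-1)))" using vstep[of "i-1"] by simp
    finally have "ph (r (i-1)) = ph (v (i-1))" by (rule ph_cancel)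
    then show ?case using vrange[of "i-1"] ph_id by simp
  qed
  have pgrow: "p (k + int n) \<ge> p k + 2 * int n" for k n
  proof (induction n)
    case 0 then show ?case by simp
  next
    case (Suc n)
    have e: "k + int (Suc n) = (k + int n) + 1" by simp
    have "p (k + int (Suc n)) = p (k + int n) + G (k + int n)" unfolding e by (rule pstep)
    then show ?case using Suc G2[of "k + int n"] by simp
  qed
  have rmono: "k < l \<Longrightarrow> r k < r l" for k l
  proof -
    assume "k < l"
    define n where "n = nat (l - k)"
    have ln: "l = k + int n" "n \<ge> 1" using \<open>k < l\<close> by (auto simp: n_def)
    have "p l \<ge> p k + 2 * int n" using pgrow[of k n] ln by simp
    then have "p l > p k" using ln by simp
    then show "r k < r l" using b_pos by (simp add: r_def)
  qed
  have rle: "k \<le> l \<Longrightarrow> r k \<le> r l" for k l using rmono by (cases "k = l") (auto simp: less_imp_le)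
  have ce: "c = of_int N * b + C" by (rule c_eq)
  have exist: "\<exists>k. a * of_int m \<le> r k \<and> r k < a * of_int m + c" for m
  proof -
    define X where "X = a * of_int m + c"
    obtain n1 :: nat where n1: "(X - \<tau>) / (2*b) < real n1" using reals_Archimedean2 by blast
    obtain n0 :: nat where n0: "(\<tau> - X) / (2*b) < real n0" using reals_Archimedean2 by blast
    have "p (int n1) \<ge> 2 * int n1" using pgrow[of 0 n1] by (simp add: p_def)
    then have "r (int n1) \<ge> \<tau> + b * (2 * real n1)" using b_pos by (simp add: r_def)
    moreover have "X - \<tau> < 2 * b * real n1" using n1 b_pos by (simp add: field_simps)
    ultimately have hi: "\<not> r (int n1) < X" by (simp add: algebra_simps)
    have "p 0 \<ge> p (- int n0) + 2 * int n0" using pgrow[of "- int n0" n0] by simp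
    then have "p (- int n0) \<le> - 2 * int n0" by (simp add: p_def)
    then have "real_of_int (p (- int n0)) \<le> - 2 * real n0" by linarith
    then have "b * real_of_int (p (- int n0)) \<le> b * (- 2 * real n0)" using b_pos by (intro mult_left_mono) auto
    then have "r (- int n0) \<le> \<tau> + b * (- 2 * real n0)" by (simp add: r_def)
    moreover have "\<tau> - X < 2 * b * real n0" using n0 b_pos by (simp add: field_simps)
    ultimately have lo: "r (- int n0) < X" by (simp add: algebra_simps)
    have "- int n0 + int (n0 + n1) = int n1" by simp
    then obtain k where k: "r k < X" "\<not> r (k+1) < X"
      using int_transition[of "\<lambda>k. r k < X" "- int n0" "n0 + n1"] lo hi by auto
    have "a * of_int m \<le> r k"
    proof (rule ccontr)
      assume neg: "\<not> a * of_int m \<le> r k"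
      define n where "n = \<lfloor>r k / a\<rfloor>"
      have rk: "r k = v k + a * of_int n" using ph_eq[of "r k"] phr[of k] by (simp add: n_def)
      have "a * of_int n < a * of_int m" using neg rk vrange[of k] by linarith
      then have "n \<le> m - 1" using int_less_mult_a by fastforce
      then have "a * of_int n \<le> a * of_int (m - 1)" using a_pos by (intro mult_left_mono) auto
      then have an: "a * of_int n \<le> a * of_int m - a" by (simp add: algebra_simps)
      show False
      proof (cases "v k < h")
        case True
        have "r (k+1) = r k + of_int N * b + b" using rstep[of k] True by (simp add: G_def algebra_simps)
        then show False using k True rk an ce by (simp add: X_def h_def)
      next
        case False
        have "r (k+1) = r k + of_int N * b" using rstep[of k] False by (simp add: G_def algebra_simps)
        then show False using k neg ce C_low ab by (simp add: X_def)
      qed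
    qed
    then show ?thesis using k by (auto simp: X_def)
  qed
  have consec: "\<not> (a * of_int m \<le> r k \<and> r (k+1) < a * of_int m + c)" for m k
  proof
    assume as: "a * of_int m \<le> r k \<and> r (k+1) < a * of_int m + c"
    show False
    proof (cases "v k < h")
      case True
      have "r (k+1) = r k + of_int N * b + b" using rstep[of k] True by (simp add: G_def algebra_simps)
      then show False using as ce C_up ab by simp
    next
      case False
      then have vC: "C \<le> v k" using D[of k] by (auto simp: D0_def)
      have "r (k+1) = r k + of_int N * b" using rstep[of k] False by (simp add: G_def algebra_simps)
      then have "r k < a * of_int m + C" using as ce by simp
      define n where "n = \<lfloor>r k / a\<rfloor>"
      have rk: "r k = v k + a * of_int n" using ph_eq[of "r k"] phr[of k] by (simp add: n_def)
      have "a * of_int n < a * of_int m" using rk vC \<open>r k < a * of_int m + C\<close> by linarith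
      then have "n \<le> m - 1" using int_less_mult_a by fastforce
      then have "a * of_int n \<le> a * of_int (m - 1)" using a_pos by (intro mult_left_mono) auto
      then show False using rk vrange[of k] as by (simp add: algebra_simps)
    qed
  qed
  have uniq: "k = k'" if "a * of_int m \<le> r k" "r k < a * of_int m + c"
      "a * of_int m \<le> r k'" "r k' < a * of_int m + c" for m k k'
  proof (rule ccontr)
    assume "k \<noteq> k'"
    then consider "k < k'" | "k' < k" by linarith
    then show False
    proof cases
      case 1
      then have "r (k+1) \<le> r k'" using rle by simp
      then show False using consec[of m k] that by simp
    next
      case 2
      then have "r (k'+1) \<le> r k" using rle by simp
      then show False using consec[of m k'] that by simp
    qed
  qed
  have pinj: "p k = p k' \<Longrightarrow> k = k'" for k k'
    using rmono by (metis linorder_neqE r_def less_irrefl)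
  define x where "x j = (if j \<in> range p then 1 else 0 :: real)" for j
  have p0: "p 0 = 0" by (simp add: p_def)
  have "0 \<in> range p" using p0 by (metis rangeI)
  then have xB: "x \<in> B0" by (auto simp: B0_def x_def)
  have M: "M_apply a b c \<tau> x m = 1" for m
  proof -
    define I where "I = {k::int. \<tau> - a * of_int m + b * of_int k \<in> {0..<c}}"
    obtain k0 where k0: "a * of_int m \<le> r k0" "r k0 < a * of_int m + c" using exist by blast
    have finI: "finite I"
    proof (rule finite_subset)
      show "I \<subseteq> {\<lfloor>(a * of_int m - \<tau>)/b\<rfloor>..\<lceil>(a * of_int m - \<tau> + c)/b\<rceil>}"
      proof
        fix k assume "k \<in> I"
        then have "a * of_int m - \<tau> \<le> b * of_int k" "b * of_int k \<le> a * of_int m - \<tau> + c"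
          by (auto simp: I_def)
        then have "(a * of_int m - \<tau>)/b \<le> of_int k" "of_int k \<le> (a * of_int m - \<tau> + c)/b"
          using b_pos by (auto simp: field_simps)
        then show "k \<in> {\<lfloor>(a * of_int m - \<tau>)/b\<rfloor>..\<lceil>(a * of_int m - \<tau> + c)/b\<rceil>}"
          by (auto simp: floor_le_iff le_ceiling_iff)
      qed
    qed simp
    have xI: "x j = (if j = p k0 then 1 else 0)" if "j \<in> I" for j
    proof (cases "j \<in> range p")
      case True
      then obtain k where k: "j = p k" by blast
      have "a * of_int m \<le> r k" "r k < a * of_int m + c" using that k by (auto simp: I_def r_def)
      then have "k = k0" using uniq k0 by blast
      then show ?thesis using k by (simp add: x_def)
    next
      case False then show ?thesis by (auto simp: x_def)
    qed
    have "p k0 \<in> I" using k0 by (auto simp: I_def r_def)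
    have "M_apply a b c \<tau> x m = (\<Sum>j\<in>I. x j)" by (simp add: M_apply_def I_def)
    also have "\<dots> = (\<Sum>j\<in>I. if j = p k0 then 1 else 0)" by (rule sum.cong) (auto simp: xI)
    also have "\<dots> = 1" using finI \<open>p k0 \<in> I\<close> by simp
    finally show ?thesis .
  qed
  show ?thesis using xB M by (auto simp: S_set_def \<tau>_def)
qed

end

context abc begin

lemma S2:
  assumes av: "\<forall>k. \<not> (h \<le> ph ((R a b c ^^ k) t) \<and> ph ((R a b c ^^ k) t) < C)"
  shows "S_set a b c \<noteq> {}"
proof -
  define \<phi> where "\<phi> k = ph ((R a b c ^^ k) t)" for k
  have orb: "\<forall>n. D0 (\<phi> n) \<and> \<phi> (Suc n) = rho (\<phi> n)"
  proof
    fix n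
    define y where "y = (R a b c ^^ n) t"
    have nh: "\<not> (h \<le> ph y \<and> ph y < C)" using av by (simp add: y_def)
    have D: "D0 (ph y)" using nh ph_range[of y] by (auto simp: D0_def)
    have "ph (R a b c y) = rho (ph y)"
    proof (cases "ph y < h")
      case True
      then have "R a b c y = y + (of_int N * b + b)" using R_low by simp
      then show ?thesis using True ph_add[of y "of_int N * b + b"] by (simp add: rho_def add.assoc)
    next
      case False
      then have "C \<le> ph y" using nh by simp
      then have "R a b c y = y + of_int N * b" using R_high by simp
      then show ?thesis using False ph_add[of y "of_int N * b"] by (simp add: rho_def)
    qed
    then show "D0 (\<phi> n) \<and> \<phi> (Suc n) = rho (\<phi> n)" using D by (simp add: \<phi>_def y_def)
  qed
  obtain \<tau> where "RAcc \<phi> \<tau>" using exists_RAcc[OF orb] by blast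
  then obtain v :: "int \<Rightarrow> real" where "\<forall>k. D0 (v k) \<and> v (k+1) = rho (v k)"
    using chain_exists[OF orb] by blast
  then have "v 0 \<in> S_set a b c" by (rule chain_S)
  then show ?thesis by blast
qed

lemma main:
  "S_set a b c = {} \<longleftrightarrow>
    (\<forall>t::real. \<exists>t0 \<in> {c0 a b c + a - b..<c0 a b c}.
       \<forall>f :: real \<Rightarrow> complex. continuous_on UNIV f \<and> (\<forall>x. f (x + a) = f x) \<longrightarrow>
         (\<lambda>n. (1 / of_nat n) * (\<Sum>k<n. f ((R a b c ^^ k) t))) \<longlonglongrightarrow> f t0)"
proof -
  have I: "{c0 a b c + a - b..<c0 a b c} = {h..<C}" by (simp add: h_def C_def)
  show ?thesis unfolding I
  proof
    assume S: "S_set a b c = {}"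
    show "\<forall>t::real. \<exists>t0 \<in> {h..<C}.
       \<forall>f :: real \<Rightarrow> complex. continuous_on UNIV f \<and> (\<forall>x. f (x + a) = f x) \<longrightarrow>
         (\<lambda>n. (1 / of_nat n) * (\<Sum>k<n. f ((R a b c ^^ k) t))) \<longlonglongrightarrow> f t0"
    proof
      fix t
      have "\<exists>k. h \<le> ph ((R a b c ^^ k) t) \<and> ph ((R a b c ^^ k) t) < C"
        using S2[of t] S by blast
      then obtain k where "h \<le> ph ((R a b c ^^ k) t)" "ph ((R a b c ^^ k) t) < C" by blast
      from trapped_conv[OF this] show "\<exists>t0 \<in> {h..<C}.
       \<forall>f :: real \<Rightarrow> complex. continuous_on UNIV f \<and> (\<forall>x. f (x + a) = f x) \<longrightarrow>
         (\<lambda>n. (1 / of_nat n) * (\<Sum>k<n. f ((R a b c ^^ k) t))) \<longlonglongrightarrow> f t0" by blast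
    qed
  next
    assume H: "\<forall>t::real. \<exists>t0 \<in> {h..<C}.
       \<forall>f :: real \<Rightarrow> complex. continuous_on UNIV f \<and> (\<forall>x. f (x + a) = f x) \<longrightarrow>
         (\<lambda>n. (1 / of_nat n) * (\<Sum>k<n. f ((R a b c ^^ k) t))) \<longlonglongrightarrow> f t0"
    show "S_set a b c = {}"
    proof (rule ccontr)
      assume "S_set a b c \<noteq> {}"
      then obtain t where t: "t \<in> S_set a b c" by blast
      obtain t0 where t0: "t0 \<in> {h..<C}" and conv: "\<forall>f :: real \<Rightarrow> complex. continuous_on UNIV f \<and> (\<forall>x. f (x + a) = f x) \<longrightarrow>
         (\<lambda>n. (1 / of_nat n) * (\<Sum>k<n. f ((R a b c ^^ k) t))) \<longlonglongrightarrow> f t0"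
        using H by blast
      obtain f :: "real \<Rightarrow> complex" where "continuous_on UNIV f" "\<forall>x. f (x + a) = f x"
        "\<not> ((\<lambda>n. (1/of_nat n) * (\<Sum>k<n. f ((R a b c ^^ k) t))) \<longlonglongrightarrow> f t0)"
        using avoid_noconv[OF S_orbit[OF t] t0] by blast
      then show False using conv by blast
    qed
  qed
qed

end

theorem theoremC1:
  fixes a b c :: real
  assumes "0 < a" "a < b" "b < c"
    and "b - a < c0 a b c" "c0 a b c < a"
    and "0 < c1 a b c" "c1 a b c < 2 * a - b"
    and "\<lfloor>c / b\<rfloor> \<ge> 2"
  shows "S_set a b c = {} \<longleftrightarrow>
    (\<forall>t::real. \<exists>t0 \<in> {c0 a b c + a - b..<c0 a b c}.
       \<forall>f :: real \<Rightarrow> complex. continuous_on UNIV f \<and> (\<forall>x. f (x + a) = f x) \<longrightarrow>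
         (\<lambda>n. (1 / of_nat n) * (\<Sum>k<n. f ((R a b c ^^ k) t))) \<longlonglongrightarrow> f t0)"
proof -
  interpret abc a b c using assms by unfold_locales auto
  show ?thesis by (rule main)
qed

end
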